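(* Let $r$ be a bihomogeneous Hermitian symmetric polynomial on $\mathbb{C}^n$ of total degree $2m$. Then $r\in\mathcal{P}_\infty$ if and only if the operator $T_r$ is non-negative definite on $V_m$, that is, $\langle T_rf,f\rangle=\int_{B_n}\int_{B_n} r(z,\overline w)f(w)\overline{f(z)}\,dV(w)\,dV(z)\ge0$ for all $f\in V_m$.
   Context: A Hermitian symmetric polynomial $r(z,\overline w)=\sum c_{\alpha\beta}z^\alpha\overline w^\beta$ ($c_{\alpha\beta}=\overline{c_{\beta\alpha}}$) is bihomogeneous of total degree $2m$ if $r(\lambda w,\overline\lambda\overline w)=|\lambda|^{2m}r(w,\overline w)$ for all $\lambda\in\mathbb{C}$. $\mathcal{P}_\infty$ is the set of $r$ with $r(z,\overline z)=\|h(z)\|^2$ for some holomorphic polynomial mapping $h$. $B_n$ is the unit ball of $\mathbb{C}^n$, $dV$ Lebesgue measure, $V_m$ the space of homogeneous holomorphic polynomials of degree $m$ on $\mathbb{C}^n$, and $(T_rf)(z)=\int_{B_n}r(z,\overline w)f(w)\,dV(w)$. *)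

theory Defs
  imports "HOL-Analysis.Analysis"
begin

text \<open>Points of C^n are vectors of type complex^'n ('n finite, n = CARD('n)).
  Multi-indices are functions 'n => nat.\<close>

definition mono :: "complex^'n \<Rightarrow> ('n::finite \<Rightarrow> nat) \<Rightarrow> complex" where
  "mono z \<alpha> = (\<Prod>i\<in>UNIV. (z $ i) ^ (\<alpha> i))"

text \<open>A polynomial r(z, conj w) = sum c_{alpha beta} z^alpha conj(w)^beta,
  given by a finitely supported coefficient function c.\<close>

definition finite_coeffs2 :: "(('n::finite \<Rightarrow> nat) \<Rightarrow> ('n \<Rightarrow> nat) \<Rightarrow> complex) \<Rightarrow> bool" where
  "finite_coeffs2 c \<longleftrightarrow> finite {(\<alpha>, \<beta>). c \<alpha> \<beta> \<noteq> 0}"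

definition rval :: "(('n::finite \<Rightarrow> nat) \<Rightarrow> ('n \<Rightarrow> nat) \<Rightarrow> complex) \<Rightarrow> complex^'n \<Rightarrow> complex^'n \<Rightarrow> complex" where
  "rval c z w = (\<Sum>(\<alpha>, \<beta>)\<in>{(\<alpha>, \<beta>). c \<alpha> \<beta> \<noteq> 0}. c \<alpha> \<beta> * mono z \<alpha> * cnj (mono w \<beta>))"

definition hermitian_symmetric :: "(('n::finite \<Rightarrow> nat) \<Rightarrow> ('n \<Rightarrow> nat) \<Rightarrow> complex) \<Rightarrow> bool" where
  "hermitian_symmetric c \<longleftrightarrow> finite_coeffs2 c \<and> (\<forall>\<alpha> \<beta>. c \<alpha> \<beta> = cnj (c \<beta> \<alpha>))"

definition bihomogeneous :: "nat \<Rightarrow> (('n::finite \<Rightarrow> nat) \<Rightarrow> ('n \<Rightarrow> nat) \<Rightarrow> complex) \<Rightarrow> bool" where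
  "bihomogeneous m c \<longleftrightarrow>
     (\<forall>l::complex. \<forall>w. rval c (\<chi> i. l * w $ i) (\<chi> i. l * w $ i) = of_real (cmod l ^ (2*m)) * rval c w w)"

definition hpoly :: "(('n::finite \<Rightarrow> nat) \<Rightarrow> complex) \<Rightarrow> complex^'n \<Rightarrow> complex" where
  "hpoly a z = (\<Sum>\<alpha>\<in>{\<alpha>. a \<alpha> \<noteq> 0}. a \<alpha> * mono z \<alpha>)"

definition P_inf :: "(('n::finite \<Rightarrow> nat) \<Rightarrow> ('n \<Rightarrow> nat) \<Rightarrow> complex) \<Rightarrow> bool" where
  "P_inf c \<longleftrightarrow> (\<exists>(N::nat) (h :: nat \<Rightarrow> ('n \<Rightarrow> nat) \<Rightarrow> complex).
      (\<forall>j<N. finite {\<alpha>. h j \<alpha> \<noteq> 0}) \<and>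
      (\<forall>z. rval c z z = of_real (\<Sum>j<N. (cmod (hpoly (h j) z))\<^sup>2)))"

definition Vm :: "nat \<Rightarrow> (complex^'n::finite \<Rightarrow> complex) set" where
  "Vm m = {f. \<exists>b :: ('n \<Rightarrow> nat) \<Rightarrow> complex.
              f = (\<lambda>z. \<Sum>\<alpha>\<in>{\<alpha>. sum \<alpha> UNIV = m}. b \<alpha> * mono z \<alpha>)}"

definition Top :: "(('n::finite \<Rightarrow> nat) \<Rightarrow> ('n \<Rightarrow> nat) \<Rightarrow> complex) \<Rightarrow> (complex^'n \<Rightarrow> complex) \<Rightarrow> complex^'n \<Rightarrow> complex" where
  "Top c f z = integral (ball 0 1) (\<lambda>w. rval c z w * f w)"

definition Tinner :: "(('n::finite \<Rightarrow> nat) \<Rightarrow> ('n \<Rightarrow> nat) \<Rightarrow> complex) \<Rightarrow> (complex^'n \<Rightarrow> complex) \<Rightarrow> complex" where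
  "Tinner c f = integral (ball 0 1) (\<lambda>z. Top c f z * cnj (f z))"

end

theory Submission
  imports Defs "HOL-Complex_Analysis.Complex_Analysis"
begin

definition Q :: "'a set \<Rightarrow> ('a \<Rightarrow> 'a \<Rightarrow> complex) \<Rightarrow> ('a \<Rightarrow> complex) \<Rightarrow> complex" where
  "Q M c u = (\<Sum>\<alpha>\<in>M. \<Sum>\<beta>\<in>M. c \<alpha> \<beta> * u \<alpha> * cnj (u \<beta>))"

lemma Q_cong: "(\<And>\<alpha>. \<alpha> \<in> M \<Longrightarrow> u \<alpha> = u' \<alpha>) \<Longrightarrow> Q M c u = Q M c u'"
  by (simp add: Q_def)

lemma Q_delta: assumes "finite M" shows "Q M c (\<lambda>\<alpha>. if \<alpha> = x then 1 else 0) = (if x \<in> M then c x x else 0)"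
proof -
  have "Q M c (\<lambda>\<alpha>. if \<alpha> = x then 1 else 0) = (\<Sum>\<alpha>\<in>M. if \<alpha> = x then (\<Sum>\<beta>\<in>M. if \<beta> = x then c x x else 0) else 0)"
    unfolding Q_def by (intro sum.cong refl) (auto intro!: sum.cong)
  also have "\<dots> = (if x \<in> M then c x x else 0)" using assms by (simp add: sum.delta')
  finally show ?thesis .
qed

lemma Q_support:
  assumes "finite M" "T \<subseteq> M" "\<And>\<alpha>. \<alpha> \<notin> T \<Longrightarrow> u \<alpha> = 0"
  shows "Q M c u = Q T c u"
proof -
  have "Q M c u = (\<Sum>\<alpha>\<in>T. \<Sum>\<beta>\<in>M. c \<alpha> \<beta> * u \<alpha> * cnj (u \<beta>))"
    unfolding Q_def by (rule sum.mono_neutral_right) (use assms in auto)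
  also have "\<dots> = Q T c u"
    unfolding Q_def by (rule sum.cong[OF refl], rule sum.mono_neutral_right) (use assms in auto)
  finally show ?thesis .
qed

lemma Q_schur:
  assumes "finite F" "x \<notin> F" "c x x \<noteq> 0"
    and c'_def: "c' = (\<lambda>\<alpha> \<beta>. c \<alpha> \<beta> - c \<alpha> x * c x \<beta> / c x x)"
  shows "Q (insert x F) c u = (\<Sum>\<alpha>\<in>insert x F. c \<alpha> x * u \<alpha>) * (\<Sum>\<beta>\<in>insert x F. c x \<beta> * cnj (u \<beta>)) / c x x
          + Q F c' u"
proof -
  let ?I = "insert x F"
  have c'x1: "c' x \<beta> = 0" for \<beta> using assms(3) by (simp add: c'_def)
  have c'x2: "c' \<alpha> x = 0" for \<alpha> using assms(3) by (simp add: c'_def)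
  have 1: "Q ?I c' u = Q F c' u"
    using assms(1,2) by (simp add: Q_def c'x1 c'x2)
  define P where "P = (\<Sum>\<alpha>\<in>?I. c \<alpha> x * u \<alpha>) * (\<Sum>\<beta>\<in>?I. c x \<beta> * cnj (u \<beta>)) / c x x"
  have "Q ?I c' u = (\<Sum>\<alpha>\<in>?I. \<Sum>\<beta>\<in>?I. c \<alpha> \<beta> * u \<alpha> * cnj (u \<beta>) - (c \<alpha> x * u \<alpha>) * (c x \<beta> * cnj (u \<beta>)) / c x x)"
    unfolding Q_def c'_def by (intro sum.cong refl) (simp add: field_simps)
  also have "\<dots> = Q ?I c u - (\<Sum>\<alpha>\<in>?I. \<Sum>\<beta>\<in>?I. (c \<alpha> x * u \<alpha>) * (c x \<beta> * cnj (u \<beta>)) / c x x)"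
    unfolding Q_def by (simp only: sum_subtractf)
  also have "(\<Sum>\<alpha>\<in>?I. \<Sum>\<beta>\<in>?I. (c \<alpha> x * u \<alpha>) * (c x \<beta> * cnj (u \<beta>)) / c x x) = P"
    unfolding P_def by (simp only: sum_product sum_divide_distrib)
  finally have 2: "Q ?I c' u = Q ?I c u - P" .
  from 1 2 have "Q F c' u = Q ?I c u - P" by simp
  then show ?thesis unfolding P_def by simp
qed

lemma herm_real: "c x x = cnj (c x x) \<Longrightarrow> c x x = of_real (Re (c x x))"
  by (metis complex_cnj_cancel_iff complex_is_Real_iff Reals_cnj_iff of_real_Re)


lemma herm_schur:
  assumes "\<forall>\<alpha> \<beta>. c \<alpha> \<beta> = cnj (c \<beta> \<alpha>)"
  shows "\<forall>\<alpha> \<beta>. (c \<alpha> \<beta> - c \<alpha> x * c x \<beta> / c x x) = cnj (c \<beta> \<alpha> - c \<beta> x * c x \<alpha> / c x x)"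
proof (intro allI)
  fix \<alpha> \<beta>
  have h1: "cnj (c \<beta> \<alpha>) = c \<alpha> \<beta>" "cnj (c \<beta> x) = c x \<beta>" "cnj (c x \<alpha>) = c \<alpha> x" "cnj (c x x) = c x x"
    using assms by (metis complex_cnj_cnj)+
  show "(c \<alpha> \<beta> - c \<alpha> x * c x \<beta> / c x x) = cnj (c \<beta> \<alpha> - c \<beta> x * c x \<alpha> / c x x)"
    by (simp only: complex_cnj_diff complex_cnj_mult complex_cnj_divide h1) (simp add: ac_simps)
qed

lemma Q_offdiag_zero:
  assumes "finite M" "x \<in> M" "\<beta> \<in> M" "x \<noteq> \<beta>" "c x x = 0"
    and herm: "\<forall>\<alpha> \<beta>. c \<alpha> \<beta> = cnj (c \<beta> \<alpha>)"
    and psd: "\<forall>u. 0 \<le> Re (Q M c u)"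
  shows "c x \<beta> = 0"
proof (rule ccontr)
  assume ne: "c x \<beta> \<noteq> 0"
  define k where "k = c x \<beta>"
  define s :: real where "s = (\<bar>Re (c \<beta> \<beta>)\<bar> + 1) / (2 * (cmod k)\<^sup>2)"
  define t where "t = - of_real s * cnj k"
  define u where "u = (\<lambda>\<alpha>. if \<alpha> = x then t else if \<alpha> = \<beta> then 1 else 0)"
  have cbx: "c \<beta> x = cnj k" unfolding k_def by (rule herm[rule_format])
  have "Q M c u = Q {x, \<beta>} c u"
    by (rule Q_support) (use assms(1-5) in \<open>auto simp: u_def\<close>)
  also have "\<dots> = c x x * t * cnj t + c x \<beta> * t + c \<beta> x * cnj t + c \<beta> \<beta>"
    using assms(4) by (simp add: Q_def u_def)
  also have "\<dots> = k * t + cnj (k * t) + c \<beta> \<beta>"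
    using assms(5) by (simp add: k_def cbx)
  finally have "Re (Q M c u) = 2 * Re (k * t) + Re (c \<beta> \<beta>)" by simp
  also have "k * t = - of_real s * (k * cnj k)" by (simp add: t_def)
  also have "k * cnj k = of_real ((cmod k)\<^sup>2)" by (simp add: complex_norm_square[symmetric])
  finally have e1: "Re (Q M c u) = - 2 * s * (cmod k)\<^sup>2 + Re (c \<beta> \<beta>)" by simp
  have "2 * s * (cmod k)\<^sup>2 = \<bar>Re (c \<beta> \<beta>)\<bar> + 1"
    using ne by (simp add: s_def k_def)
  with e1 have "Re (Q M c u) < 0" by simp
  with psd show False by (metis not_le)
qed

lemma factorization:
  assumes "finite M"
  shows "(\<forall>\<alpha> \<beta>. c \<alpha> \<beta> = cnj (c \<beta> \<alpha>)) \<Longrightarrow> (\<forall>u. 0 \<le> Re (Q M c u)) \<Longrightarrow>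
    \<exists>(N::nat) a. \<forall>u. Q M c u = of_real (\<Sum>j<N. (cmod (\<Sum>\<alpha>\<in>M. a j \<alpha> * u \<alpha>))\<^sup>2)"
  using assms
proof (induction M arbitrary: c rule: finite_induct)
  case (empty c)
  show ?case by (rule exI[of _ 0], rule exI) (simp add: Q_def)
next
  case (insert x F c)
  let ?I = "insert x F"
  have cxx: "c x x = of_real (Re (c x x))" using insert.prems(1) herm_real by metis
  have "0 \<le> Re (c x x)"
    using insert.prems(2)[rule_format, of "\<lambda>\<alpha>. if \<alpha> = x then 1 else 0"] Q_delta[OF insert.hyps(1)[THEN finite.insertI]]
    by (metis insertI1)
  show ?case
  proof (cases "c x x = 0")
    case True
    have z1: "c x \<beta> = 0" if "\<beta> \<in> F" for \<beta>
      by (rule Q_offdiag_zero[of ?I x \<beta> c, OF _ _ _ _ True insert.prems(1) insert.prems(2)]) (use that insert.hyps in auto)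
    have z2: "c \<beta> x = 0" if "\<beta> \<in> F" for \<beta>
      using z1[OF that] insert.prems(1)[rule_format, of \<beta> x] by simp
    have eqQ: "Q ?I c u = Q F c u" for u
      using insert.hyps True z1 z2 by (simp add: Q_def)
    have psdF: "\<forall>u. 0 \<le> Re (Q F c u)" using insert.prems(2) eqQ by simp
    obtain N :: nat and a where a: "\<forall>u. Q F c u = of_real (\<Sum>j<N. (cmod (\<Sum>\<alpha>\<in>F. a j \<alpha> * u \<alpha>))\<^sup>2)"
      using insert.IH[OF insert.prems(1) psdF] by blast
    define a' where "a' = (\<lambda>j \<alpha>. if \<alpha> = x then 0 else a j \<alpha>)"
    have "(\<Sum>\<alpha>\<in>?I. a' j \<alpha> * u \<alpha>) = (\<Sum>\<alpha>\<in>F. a j \<alpha> * u \<alpha>)" for j u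
      using insert.hyps by (auto simp: a'_def intro!: sum.cong)
    then show ?thesis using a eqQ by (intro exI[of _ N] exI[of _ a']) auto
  next
    case False
    define r where "r = Re (c x x)"
    have r: "r > 0" proof -
      have "Re (c x x) \<noteq> 0" using False cxx by (metis of_real_0)
      then show ?thesis using \<open>0 \<le> Re (c x x)\<close> r_def by simp
    qed
    have cxr: "c x x = of_real r" using cxx r_def by simp
    define c' where "c' = (\<lambda>\<alpha> \<beta>. c \<alpha> \<beta> - c \<alpha> x * c x \<beta> / c x x)"
    have herm': "\<forall>\<alpha> \<beta>. c' \<alpha> \<beta> = cnj (c' \<beta> \<alpha>)"
      unfolding c'_def by (rule herm_schur[OF insert.prems(1)])
    have conjL: "(\<Sum>\<beta>\<in>?I. c x \<beta> * cnj (u \<beta>)) = cnj (\<Sum>\<alpha>\<in>?I. c \<alpha> x * u \<alpha>)" for u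
      by (simp add: cnj_sum) (metis (no_types) insert.prems(1) complex_cnj_cnj)
    have sch: "Q ?I c u = (\<Sum>\<alpha>\<in>?I. c \<alpha> x * u \<alpha>) * cnj (\<Sum>\<alpha>\<in>?I. c \<alpha> x * u \<alpha>) / c x x + Q F c' u" for u
      using Q_schur[OF insert.hyps(1,2) False c'_def, of u] conjL[of u] by simp
    have psd': "\<forall>u. 0 \<le> Re (Q F c' u)"
    proof
      fix u
      define u' where "u' = u(x := - (\<Sum>\<alpha>\<in>F. c \<alpha> x * u \<alpha>) / c x x)"
      have "(\<Sum>\<alpha>\<in>?I. c \<alpha> x * u' \<alpha>) = c x x * u' x + (\<Sum>\<alpha>\<in>F. c \<alpha> x * u \<alpha>)"
        using insert.hyps by (simp add: u'_def) (auto intro!: sum.cong)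
      also have "\<dots> = 0" using False by (simp add: u'_def)
      finally have "Q ?I c u' = Q F c' u'" using sch[of u'] by simp
      also have "\<dots> = Q F c' u" by (rule Q_cong) (use insert.hyps in \<open>auto simp: u'_def\<close>)
      finally show "0 \<le> Re (Q F c' u)" using insert.prems(2) by metis
    qed
    obtain N :: nat and a where a: "\<forall>u. Q F c' u = of_real (\<Sum>j<N. (cmod (\<Sum>\<alpha>\<in>F. a j \<alpha> * u \<alpha>))\<^sup>2)"
      using insert.IH[OF herm' psd'] by metis
    define a' where "a' = (\<lambda>j \<alpha>. if j < N then (if \<alpha> = x then 0 else a j \<alpha>) else c \<alpha> x / of_real (sqrt r))"
    have A1: "(\<Sum>\<alpha>\<in>?I. a' j \<alpha> * u \<alpha>) = (\<Sum>\<alpha>\<in>F. a j \<alpha> * u \<alpha>)" if "j < N" for j u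
      using insert.hyps that by (auto simp: a'_def intro!: sum.cong)
    have A2: "(\<Sum>\<alpha>\<in>?I. a' N \<alpha> * u \<alpha>) = (\<Sum>\<alpha>\<in>?I. c \<alpha> x * u \<alpha>) / of_real (sqrt r)" for u
      by (simp add: a'_def sum_divide_distrib)
    show ?thesis
    proof (intro exI[of _ "Suc N"] exI[of _ a'] allI)
      fix u
      define L where "L = (\<Sum>\<alpha>\<in>?I. c \<alpha> x * u \<alpha>)"
      have "Q ?I c u = L * cnj L / c x x + Q F c' u" using sch L_def by simp
      also have "L * cnj L / c x x = of_real ((cmod L)\<^sup>2 / r)"
        by (simp add: cxr complex_norm_square[symmetric])
      also have "(cmod L)\<^sup>2 / r = (cmod (\<Sum>\<alpha>\<in>?I. a' N \<alpha> * u \<alpha>))\<^sup>2"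
        using r by (simp add: A2 L_def[symmetric] norm_divide power_divide)
      finally show "Q ?I c u = of_real (\<Sum>j<Suc N. (cmod (\<Sum>\<alpha>\<in>?I. a' j \<alpha> * u \<alpha>))\<^sup>2)"
        using a A1 by simp
    qed
  qed
qed

lemma solve_pd:
  assumes "finite M"
  shows "(\<forall>\<alpha> \<beta>. c \<alpha> \<beta> = cnj (c \<beta> \<alpha>)) \<Longrightarrow> (\<forall>u. (\<exists>\<alpha>\<in>M. u \<alpha> \<noteq> 0) \<longrightarrow> 0 < Re (Q M c u)) \<Longrightarrow>
    \<exists>u. \<forall>\<beta>\<in>M. (\<Sum>\<alpha>\<in>M. c \<alpha> \<beta> * u \<alpha>) = v \<beta>"
  using assms
proof (induction M arbitrary: c v rule: finite_induct)
  case (empty c v)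
  show ?case by simp
next
  case (insert x F c v)
  let ?I = "insert x F"
  have cxx: "c x x = of_real (Re (c x x))" using insert.prems(1) herm_real by metis
  have "0 < Re (c x x)"
    using insert.prems(2)[rule_format, of "\<lambda>\<alpha>. if \<alpha> = x then 1 else 0"] Q_delta[OF insert.hyps(1)[THEN finite.insertI]]
    by (metis insertI1 zero_neq_one)
  then have ne: "c x x \<noteq> 0" by auto
  define c' where "c' = (\<lambda>\<alpha> \<beta>. c \<alpha> \<beta> - c \<alpha> x * c x \<beta> / c x x)"
  have herm': "\<forall>\<alpha> \<beta>. c' \<alpha> \<beta> = cnj (c' \<beta> \<alpha>)"
    unfolding c'_def by (rule herm_schur[OF insert.prems(1)])
  have conjL: "(\<Sum>\<beta>\<in>?I. c x \<beta> * cnj (u \<beta>)) = cnj (\<Sum>\<alpha>\<in>?I. c \<alpha> x * u \<alpha>)" for u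
    by (simp add: cnj_sum) (metis (no_types) insert.prems(1) complex_cnj_cnj)
  have sch: "Q ?I c u = (\<Sum>\<alpha>\<in>?I. c \<alpha> x * u \<alpha>) * cnj (\<Sum>\<alpha>\<in>?I. c \<alpha> x * u \<alpha>) / c x x + Q F c' u" for u
    using Q_schur[OF insert.hyps(1,2) ne c'_def, of u] conjL[of u] by simp
  have pd': "\<forall>u. (\<exists>\<alpha>\<in>F. u \<alpha> \<noteq> 0) \<longrightarrow> 0 < Re (Q F c' u)"
  proof (intro allI impI)
    fix u :: "_ \<Rightarrow> complex" assume nz: "\<exists>\<alpha>\<in>F. u \<alpha> \<noteq> 0"
    define u' where "u' = u(x := - (\<Sum>\<alpha>\<in>F. c \<alpha> x * u \<alpha>) / c x x)"
    have "(\<Sum>\<alpha>\<in>?I. c \<alpha> x * u' \<alpha>) = c x x * u' x + (\<Sum>\<alpha>\<in>F. c \<alpha> x * u \<alpha>)"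
      using insert.hyps by (simp add: u'_def) (auto intro!: sum.cong)
    also have "\<dots> = 0" using ne by (simp add: u'_def)
    finally have "Q ?I c u' = Q F c' u'" using sch[of u'] by simp
    also have "\<dots> = Q F c' u" by (rule Q_cong) (use insert.hyps in \<open>auto simp: u'_def\<close>)
    finally have eq: "Q ?I c u' = Q F c' u" .
    have "\<exists>\<alpha>\<in>?I. u' \<alpha> \<noteq> 0" using nz insert.hyps(2) by (auto simp: u'_def)
    then show "0 < Re (Q F c' u)" using insert.prems(2) eq by metis
  qed
  define v' where "v' = (\<lambda>\<beta>. v \<beta> - c x \<beta> * v x / c x x)"
  obtain u0 where u0: "\<forall>\<beta>\<in>F. (\<Sum>\<alpha>\<in>F. c' \<alpha> \<beta> * u0 \<alpha>) = v' \<beta>"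
    using insert.IH[OF herm' pd'] by metis
  define u where "u = u0(x := (v x - (\<Sum>\<alpha>\<in>F. c \<alpha> x * u0 \<alpha>)) / c x x)"
  have sF: "(\<Sum>\<alpha>\<in>F. c \<alpha> \<beta> * u \<alpha>) = (\<Sum>\<alpha>\<in>F. c \<alpha> \<beta> * u0 \<alpha>)" for \<beta>
    using insert.hyps(2) by (auto simp: u_def intro!: sum.cong)
  show ?case
  proof (intro exI ballI)
    fix \<beta> assume \<beta>: "\<beta> \<in> ?I"
    have "(\<Sum>\<alpha>\<in>?I. c \<alpha> \<beta> * u \<alpha>) = c x \<beta> * u x + (\<Sum>\<alpha>\<in>F. c \<alpha> \<beta> * u0 \<alpha>)"
      using insert.hyps by (simp add: sF)
    also have "\<dots> = v \<beta>"
    proof (cases "\<beta> = x")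
      case True then show ?thesis using ne by (simp add: u_def field_simps)
    next
      case False
      then have "\<beta> \<in> F" using \<beta> by auto
      then have "(\<Sum>\<alpha>\<in>F. c' \<alpha> \<beta> * u0 \<alpha>) = v' \<beta>" using u0 by auto
      then have "(\<Sum>\<alpha>\<in>F. c \<alpha> \<beta> * u0 \<alpha>) - c x \<beta> / c x x * (\<Sum>\<alpha>\<in>F. c \<alpha> x * u0 \<alpha>) = v \<beta> - c x \<beta> * v x / c x x"
        by (simp add: c'_def v'_def sum_subtractf sum_distrib_left algebra_simps)
      then show ?thesis using ne by (simp add: u_def field_simps)
    qed
    finally show "(\<Sum>\<alpha>\<in>?I. c \<alpha> \<beta> * u \<alpha>) = v \<beta>" .
  qed
qed

lemma mono_scale: "mono (\<chi> i. t * z $ i) \<alpha> = t ^ sum \<alpha> UNIV * mono z \<alpha>"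
  by (simp add: mono_def power_mult_distrib prod.distrib power_sum)

lemma cnj_mono: "cnj (mono z \<alpha>) = mono (\<chi> i. cnj (z $ i)) \<alpha>"
  by (simp add: mono_def cnj_prod)

definition lin :: "complex^'n \<Rightarrow> complex^'n \<Rightarrow> complex \<Rightarrow> complex^'n" where
  "lin b d s = (\<chi> k. b $ k + s * d $ k)"

lemma hol_mono [holomorphic_intros]: "(\<lambda>x. mono (lin b d (f x)) \<alpha>) holomorphic_on S"
  if "f holomorphic_on S"
  unfolding mono_def lin_def by (simp, intro holomorphic_intros that)

lemma cnj_mono_lin: "cnj (mono (lin b d (cnj s)) \<beta>) = mono (lin (\<chi> i. cnj (b $ i)) (\<chi> i. cnj (d $ i)) s) \<beta>"
  by (simp add: cnj_mono lin_def)

lemma hol_cmono [holomorphic_intros]: "(\<lambda>x. cnj (mono (lin b d (cnj (f x))) \<beta>)) holomorphic_on S"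
  if "f holomorphic_on S"
  unfolding cnj_mono_lin by (intro holomorphic_intros that)

lemma Reals_limpt: "(0::complex) islimpt \<real>"
proof (rule islimpt_approachable[THEN iffD2], intro allI impI)
  fix e :: real assume "0 < e"
  then show "\<exists>x'\<in>(\<real>::complex set). x' \<noteq> 0 \<and> dist x' 0 < e"
    by (intro bexI[of _ "of_real (e/2) :: complex"]) (auto simp: dist_norm norm_of_real)
qed

lemma L0:
  fixes H :: "complex \<Rightarrow> complex \<Rightarrow> complex"
  assumes zero: "\<And>t. H t (cnj t) = 0"
    and hol: "\<And>A B C D. (\<lambda>x. H (A*x+B) (C*x+D)) holomorphic_on UNIV"
  shows "H s u = 0"
proof -
  have step1: "H (x + \<i> * of_real y) (x - \<i> * of_real y) = 0" for x :: complex and y :: real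
  proof (rule analytic_continuation[where f="\<lambda>x. H (x + \<i> * of_real y) (x - \<i> * of_real y)" and S=UNIV and U=\<real> and \<xi>=0])
    show "(\<lambda>x. H (x + \<i> * of_real y) (x - \<i> * of_real y)) holomorphic_on UNIV"
      using hol[of 1 "\<i> * of_real y" 1 "- (\<i> * of_real y)"] by simp
    show "(0::complex) islimpt \<real>" by (rule Reals_limpt)
    fix z :: complex assume "z \<in> \<real>"
    then obtain r where "z = of_real r" by (auto elim: Reals_cases)
    then have "cnj (z + \<i> * of_real y) = z - \<i> * of_real y" by simp
    then show "H (z + \<i> * of_real y) (z - \<i> * of_real y) = 0" using zero by metis
  qed auto
  have step2: "H (x + \<i> * y) (x - \<i> * y) = 0" for x y :: complex
  proof (rule analytic_continuation[where f="\<lambda>y. H (x + \<i> * y) (x - \<i> * y)" and S=UNIV and U=\<real> and \<xi>=0])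
    show "(\<lambda>y. H (x + \<i> * y) (x - \<i> * y)) holomorphic_on UNIV"
      using hol[of "\<i>" x "-\<i>" x] by (simp add: algebra_simps)
    show "(0::complex) islimpt \<real>" by (rule Reals_limpt)
    fix z :: complex assume "z \<in> \<real>"
    then obtain r where "z = of_real r" by (auto elim: Reals_cases)
    then show "H (x + \<i> * z) (x - \<i> * z) = 0" using step1 by simp
  qed auto
  have "s = (s+u)/2 + \<i> * ((s-u)/(2*\<i>))" "u = (s+u)/2 - \<i> * ((s-u)/(2*\<i>))"
    by (simp_all add: field_simps)
  then show ?thesis using step2 by metis
qed

definition SP :: "(complex^'n \<Rightarrow> complex^'n \<Rightarrow> complex) \<Rightarrow> bool" where
  "SP F \<longleftrightarrow> (\<forall>b d A B C D. (\<lambda>x. F (lin b d (A*x+B)) (lin b d (cnj (C*x+D)))) holomorphic_on UNIV)"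

lemma polarization:
  assumes "SP F" "\<And>z. F z z = 0"
  shows "F z w = 0"
proof -
  define d where "d = z - w"
  define H where "H s u = F (lin w d s) (lin w d (cnj u))" for s u
  have "H 1 0 = 0"
  proof (rule L0[of H])
    show "H t (cnj t) = 0" for t using assms(2) by (simp add: H_def)
    show "(\<lambda>x. H (A*x+B) (C*x+D)) holomorphic_on UNIV" for A B C D
      using assms(1) unfolding SP_def H_def by blast
  qed
  moreover have "lin w d 1 = z" "lin w d (cnj 0) = w"
    by (simp_all add: lin_def d_def vec_eq_iff)
  ultimately show ?thesis by (simp add: H_def)
qed

lemma SP_rval: "SP (\<lambda>z w. \<Sum>x\<in>T. g x * mono z (fst x) * cnj (mono w (snd x)))"
  unfolding SP_def by (intro allI holomorphic_intros)

lemma rval_alt: "rval c z w = (\<Sum>x\<in>{(\<alpha>, \<beta>). c \<alpha> \<beta> \<noteq> 0}. c (fst x) (snd x) * mono z (fst x) * cnj (mono w (snd x)))"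
  unfolding rval_def by (simp add: case_prod_beta)

lemma CE1:
  fixes e :: "'a \<Rightarrow> complex"
  assumes "finite S" "\<And>s. (\<Sum>x\<in>S. e x * s ^ p x) = 0"
  shows "(\<Sum>x\<in>{x\<in>S. p x = i}. e x) = 0"
proof -
  define N where "N = Max (insert 0 (p ` S))"
  have pN: "p x \<le> N" if "x \<in> S" for x
    unfolding N_def using assms(1) that by (intro Max_ge) auto
  have grp: "(\<Sum>x\<in>S. e x * s ^ p x) = (\<Sum>k\<le>N. (\<Sum>x\<in>{x\<in>S. p x = k}. e x) * s ^ k)" for s
  proof -
    have "(\<Sum>k\<le>N. (\<Sum>x\<in>{x\<in>S. p x = k}. e x) * s ^ k) = (\<Sum>k\<le>N. (\<Sum>x | x \<in> S \<and> p x = k. e x * s ^ p x))"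
      by (intro sum.cong refl) (auto simp: sum_distrib_right)
    also have "\<dots> = (\<Sum>x\<in>S. e x * s ^ p x)"
      by (rule sum.group) (use assms(1) pN in auto)
    finally show ?thesis by simp
  qed
  have "\<forall>k. k \<le> N \<longrightarrow> (\<Sum>x\<in>{x\<in>S. p x = k}. e x) = 0"
    using polyfun_eq_0[of "\<lambda>k. \<Sum>x\<in>{x\<in>S. p x = k}. e x" N] assms(2) grp by simp
  then show ?thesis
  proof (cases "i \<le> N")
    case False
    then have E: "{x\<in>S. p x = i} = {}" using pN by force
    show ?thesis unfolding E by simp
  qed auto
qed

lemma CE2:
  fixes e :: "'a \<Rightarrow> complex"
  assumes "finite S" "\<And>s u. (\<Sum>x\<in>S. e x * s ^ p x * u ^ q x) = 0"
  shows "(\<Sum>x\<in>{x\<in>S. p x = i \<and> q x = j}. e x) = 0"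
proof -
  have "(\<Sum>x\<in>{x\<in>S. p x = i}. e x * u ^ q x) = 0" for u
  proof (rule CE1[where e="\<lambda>x. e x * u ^ q x"])
    show "(\<Sum>x\<in>S. e x * u ^ q x * s ^ p x) = 0" for s
    proof -
      have "(\<Sum>x\<in>S. e x * u ^ q x * s ^ p x) = (\<Sum>x\<in>S. e x * s ^ p x * u ^ q x)"
        by (simp add: mult_ac)
      then show ?thesis using assms(2) by simp
    qed
  qed (use assms(1) in auto)
  note X = this
  have "(\<Sum>x\<in>{x\<in>{x\<in>S. p x = i}. q x = j}. e x) = 0"
    by (rule CE1[where S="{x\<in>S. p x = i}" and p=q]) (use assms(1) X in auto)
  moreover have "{x\<in>{x\<in>S. p x = i}. q x = j} = {x\<in>S. p x = i \<and> q x = j}" by auto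
  ultimately show ?thesis by simp
qed

lemma HU_aux:
  fixes b :: "('n::finite \<Rightarrow> nat) \<Rightarrow> complex"
  assumes "finite K"
  shows "finite M' \<Longrightarrow> (\<forall>z::complex^'n. (\<Sum>\<gamma>\<in>M'. b \<gamma> * (\<Prod>k\<in>K. (z $ k) ^ \<gamma> k)) = 0) \<Longrightarrow>
     (\<Sum>\<gamma>\<in>{\<gamma>\<in>M'. \<forall>k\<in>K. \<gamma> k = \<gamma>0 k}. b \<gamma>) = 0"
  using assms
proof (induction K arbitrary: M' rule: finite_induct)
  case empty
  then show ?case by simp
next
  case (insert k K M')
  define M'' where "M'' = {\<gamma>\<in>M'. \<gamma> k = \<gamma>0 k}"
  have "(\<Sum>\<gamma>\<in>M''. b \<gamma> * (\<Prod>j\<in>K. (z $ j) ^ \<gamma> j)) = 0" for z :: "complex^'n"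
  proof -
    have "(\<Sum>\<gamma>\<in>M'. (b \<gamma> * (\<Prod>j\<in>K. (z $ j) ^ \<gamma> j)) * s ^ \<gamma> k) = 0" for s
    proof -
      define z' where "z' = (\<chi> j. if j = k then s else z $ j)"
      have pK: "(\<Prod>j\<in>K. (z' $ j) ^ \<gamma> j) = (\<Prod>j\<in>K. (z $ j) ^ \<gamma> j)" for \<gamma>
        using insert.hyps(2) by (auto simp: z'_def intro!: prod.cong)
      have "(\<Prod>j\<in>insert k K. (z' $ j) ^ \<gamma> j) = s ^ \<gamma> k * (\<Prod>j\<in>K. (z $ j) ^ \<gamma> j)" for \<gamma>
        using insert.hyps by (simp add: pK) (simp add: z'_def)
      then show ?thesis using insert.prems(2)[rule_format, of z'] by (simp add: mult_ac)
    qed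
    from CE1[OF insert.prems(1) this, of "\<gamma>0 k"] show ?thesis by (simp add: M''_def)
  qed
  then have "(\<Sum>\<gamma>\<in>{\<gamma>\<in>M''. \<forall>j\<in>K. \<gamma> j = \<gamma>0 j}. b \<gamma>) = 0"
    using insert.IH[of M''] insert.prems(1) by (simp add: M''_def)
  moreover have "{\<gamma>\<in>M''. \<forall>j\<in>K. \<gamma> j = \<gamma>0 j} = {\<gamma>\<in>M'. \<forall>j\<in>insert k K. \<gamma> j = \<gamma>0 j}"
    by (auto simp: M''_def)
  ultimately show ?case by simp
qed

lemma HU:
  fixes b :: "('n::finite \<Rightarrow> nat) \<Rightarrow> complex"
  assumes "finite M'" "\<And>z. (\<Sum>\<gamma>\<in>M'. b \<gamma> * mono z \<gamma>) = 0" "\<gamma>0 \<in> M'"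
  shows "b \<gamma>0 = 0"
proof -
  have "(\<Sum>\<gamma>\<in>{\<gamma>\<in>M'. \<forall>k\<in>UNIV. \<gamma> k = \<gamma>0 k}. b \<gamma>) = 0"
    by (rule HU_aux) (use assms in \<open>auto simp: mono_def\<close>)
  moreover have "{\<gamma>\<in>M'. \<forall>k\<in>UNIV. \<gamma> k = \<gamma>0 k} = {\<gamma>0}" using assms(3) by (auto simp: fun_eq_iff)
  ultimately show ?thesis by simp
qed

lemma finite_M: "finite {\<alpha>::'n::finite \<Rightarrow> nat. sum \<alpha> UNIV = m}"
proof (rule finite_subset)
  show "{\<alpha>::'n \<Rightarrow> nat. sum \<alpha> UNIV = m} \<subseteq> {f. \<forall>x. (x \<in> UNIV \<longrightarrow> f x \<in> {..m}) \<and> (x \<notin> UNIV \<longrightarrow> f x = 0)}"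
  proof
    fix \<alpha> :: "'n \<Rightarrow> nat" assume "\<alpha> \<in> {\<alpha>. sum \<alpha> UNIV = m}"
    then show "\<alpha> \<in> {f. \<forall>x. (x \<in> UNIV \<longrightarrow> f x \<in> {..m}) \<and> (x \<notin> UNIV \<longrightarrow> f x = 0)}"
      using member_le_sum[of _ UNIV \<alpha>] by auto
  qed
  show "finite {f::'n \<Rightarrow> nat. \<forall>x. (x \<in> UNIV \<longrightarrow> f x \<in> {..m}) \<and> (x \<notin> UNIV \<longrightarrow> f x = 0)}"
    by (rule finite_set_of_finite_funs) auto
qed

lemma rval_scale:
  "rval c (\<chi> i. t * z $ i) (\<chi> i. t * z $ i) =
   (\<Sum>x\<in>{(\<alpha>, \<beta>). c \<alpha> \<beta> \<noteq> 0}. (c (fst x) (snd x) * mono z (fst x) * cnj (mono z (snd x))) * t ^ sum (fst x) UNIV * cnj t ^ sum (snd x) UNIV)"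
  unfolding rval_alt by (intro sum.cong refl) (simp add: mono_scale mult_ac)

lemma diag_reduction:
  fixes c :: "('n::finite \<Rightarrow> nat) \<Rightarrow> ('n \<Rightarrow> nat) \<Rightarrow> complex"
  assumes fin: "finite {(\<alpha>, \<beta>). c \<alpha> \<beta> \<noteq> 0}" and bihom: "bihomogeneous m c"
  shows "rval c z z = (\<Sum>\<alpha>\<in>{\<alpha>. sum \<alpha> UNIV = m}. \<Sum>\<beta>\<in>{\<alpha>. sum \<alpha> UNIV = m}. c \<alpha> \<beta> * mono z \<alpha> * cnj (mono z \<beta>))"
proof -
  define S where "S = {(\<alpha>, \<beta>). c \<alpha> \<beta> \<noteq> 0}"
  define M where "M = {\<alpha>::'n \<Rightarrow> nat. sum \<alpha> UNIV = m}"
  define e where "e x = c (fst x) (snd x) * mono z (fst x) * cnj (mono z (snd x))" for x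
  define p where "p x = sum (fst x) UNIV" for x :: "('n \<Rightarrow> nat) \<times> ('n \<Rightarrow> nat)"
  define q where "q x = sum (snd x) UNIV" for x :: "('n \<Rightarrow> nat) \<times> ('n \<Rightarrow> nat)"
  define T where "T = insert None (Some ` S)"
  define e' where "e' = case_option (- rval c z z) e"
  define p' where "p' = case_option m p"
  define q' where "q' = case_option m q"
  have finS: "finite S" using fin by (simp add: S_def)
  have finT: "finite T" using finS by (simp add: T_def)
  have sumT: "(\<Sum>y\<in>T. f y) = f None + (\<Sum>x\<in>S. f (Some x))" for f :: "_ \<Rightarrow> complex"
    unfolding T_def using finS by (simp add: sum.reindex)
  have H0: "(\<Sum>y\<in>T. e' y * s ^ p' y * u ^ q' y) = 0" for s u
  proof (rule L0[of "\<lambda>s u. \<Sum>y\<in>T. e' y * s ^ p' y * u ^ q' y"])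
    show "(\<lambda>x. \<Sum>y\<in>T. e' y * (A*x+B) ^ p' y * (C*x+D) ^ q' y) holomorphic_on UNIV" for A B C D
      by (intro holomorphic_intros)
    fix t
    have "(t * cnj t) ^ m = of_real (cmod t ^ (2*m))"
      by (simp add: power_mult complex_norm_square[symmetric])
    then have "rval c (\<chi> i. t * z $ i) (\<chi> i. t * z $ i) = t ^ m * cnj t ^ m * rval c z z"
      using bihom unfolding bihomogeneous_def by (simp add: power_mult_distrib)
    then show "(\<Sum>y\<in>T. e' y * t ^ p' y * cnj t ^ q' y) = 0"
      unfolding sumT by (simp add: e'_def p'_def q'_def rval_scale e_def p_def q_def S_def)
  qed
  have "(\<Sum>y\<in>{y\<in>T. p' y = m \<and> q' y = m}. e' y) = 0"
    by (rule CE2[OF finT]) (rule H0)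
  moreover have "{y\<in>T. p' y = m \<and> q' y = m} = insert None (Some ` {x\<in>S. p x = m \<and> q x = m})"
    by (auto simp: T_def p'_def q'_def)
  ultimately have "rval c z z = (\<Sum>x\<in>{x\<in>S. p x = m \<and> q x = m}. e x)"
    using finS by (simp add: sum.reindex e'_def)
  also have "\<dots> = (\<Sum>x\<in>M \<times> M. e x)"
  proof (rule sum.mono_neutral_left)
    show "finite (M \<times> M)" unfolding M_def by (intro finite_cartesian_product finite_M)
    show "{x\<in>S. p x = m \<and> q x = m} \<subseteq> M \<times> M" by (auto simp: M_def p_def q_def)
    show "\<forall>x\<in>M \<times> M - {x\<in>S. p x = m \<and> q x = m}. e x = 0"
      by (auto simp: M_def p_def q_def S_def e_def)
  qed
  also have "\<dots> = (\<Sum>\<alpha>\<in>M. \<Sum>\<beta>\<in>M. c \<alpha> \<beta> * mono z \<alpha> * cnj (mono z \<beta>))"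
    by (simp add: sum.cartesian_product e_def case_prod_beta)
  finally show ?thesis by (simp add: M_def)
qed

lemma cont_mono [continuous_intros]: "continuous_on S (\<lambda>z::complex^'n::finite. mono z \<alpha>)"
  unfolding mono_def by (intro continuous_intros)

lemma int_ball:
  fixes g :: "complex^'n::finite \<Rightarrow> 'b::euclidean_space"
  assumes "continuous_on UNIV g"
  shows "g integrable_on ball 0 1"
proof -
  have "g absolutely_integrable_on cbox (-One) One"
    by (rule absolutely_integrable_continuous) (use assms continuous_on_subset in blast)
  moreover have "ball 0 1 \<subseteq> cbox (-One) (One :: complex^'n)"
  proof
    fix x :: "complex^'n" assume "x \<in> ball 0 1"
    then have "norm x < 1" by simp
    show "x \<in> cbox (-One) One"
      unfolding mem_box
    proof (intro ballI)
      fix i :: "complex^'n" assume i: "i \<in> Basis"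
      have "\<bar>x \<bullet> i\<bar> < 1" using Basis_le_norm[OF i, of x] \<open>norm x < 1\<close> by linarith
      then show "- One \<bullet> i \<le> x \<bullet> i \<and> x \<bullet> i \<le> One \<bullet> i" using i by (simp add: inner_minus_left abs_less_iff)
    qed
  qed
  moreover have "ball (0::complex^'n) 1 \<in> sets lebesgue" using lmeasurable_ball fmeasurableD by blast
  ultimately have "g absolutely_integrable_on ball 0 1"
    using set_integrable_subset[of lebesgue "cbox (-One) One" g "ball 0 1"] by blast
  then show ?thesis by (rule set_lebesgue_integral_eq_integral(1))
qed

lemma hpoly_scale:
  assumes "\<And>\<gamma>. \<gamma> \<in> M \<Longrightarrow> sum \<gamma> UNIV = m"
  shows "(\<Sum>\<gamma>\<in>M. b \<gamma> * mono (t *\<^sub>R z) \<gamma>) = of_real t ^ m * (\<Sum>\<gamma>\<in>M. b \<gamma> * mono z \<gamma>)"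
proof -
  have "t *\<^sub>R z = (\<chi> i. of_real t * z $ i)"
    unfolding vec_eq_iff
  proof
    fix i show "(t *\<^sub>R z) $ i = (\<chi> i. of_real t * z $ i) $ i"
      by (simp only: vector_scaleR_component vec_lambda_beta) (simp add: scaleR_conv_of_real)
  qed
  then show ?thesis using assms by (simp add: mono_scale sum_distrib_left mult_ac)
qed

lemma gram_pd:
  fixes b :: "('n::finite \<Rightarrow> nat) \<Rightarrow> complex"
  assumes finM: "finite M" and deg: "\<And>\<gamma>. \<gamma> \<in> M \<Longrightarrow> sum \<gamma> UNIV = m"
    and nz: "\<exists>\<alpha>\<in>M. b \<alpha> \<noteq> 0"
  shows "0 < Re (Q M (\<lambda>\<alpha> \<beta>. integral (ball (0::complex^'n) 1) (\<lambda>w. cnj (mono w \<beta>) * mono w \<alpha>)) b)"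
proof -
  define f where "f w = (\<Sum>\<gamma>\<in>M. b \<gamma> * mono w \<gamma>)" for w :: "complex^'n"
  have contf: "continuous_on UNIV f" unfolding f_def by (intro continuous_intros)
  have "Q M (\<lambda>\<alpha> \<beta>. integral (ball (0::complex^'n) 1) (\<lambda>w. cnj (mono w \<beta>) * mono w \<alpha>)) b
      = (\<Sum>\<alpha>\<in>M. \<Sum>\<beta>\<in>M. integral (ball 0 1) (\<lambda>w. b \<alpha> * mono w \<alpha> * cnj (b \<beta> * mono w \<beta>)))"
    unfolding Q_def by (intro sum.cong refl) (simp add: mult_ac)
  also have "\<dots> = integral (ball 0 1) (\<lambda>w. f w * cnj (f w))"
    unfolding f_def cnj_sum sum_distrib_left sum_distrib_right
    by (simp add: integral_sum finM int_ball continuous_intros) (rule sum.swap)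
  finally have Qeq: "Q M (\<lambda>\<alpha> \<beta>. integral (ball (0::complex^'n) 1) (\<lambda>w. cnj (mono w \<beta>) * mono w \<alpha>)) b
      = integral (ball 0 1) (\<lambda>w. f w * cnj (f w))" .
  define F where "F w = (cmod (f w))\<^sup>2" for w
  have contF: "continuous_on UNIV F" unfolding F_def by (intro continuous_intros contf)
  have intF: "F integrable_on ball 0 1"
    by (rule int_ball[OF contF])
  have fF: "f w * cnj (f w) = of_real (F w)" for w by (simp add: F_def complex_norm_square[symmetric])
  then have "Re (integral (ball 0 1) (\<lambda>w. f w * cnj (f w))) = integral (ball 0 1) F"
  proof -
    have "((\<lambda>w. of_real (F w) :: complex) has_integral of_real (integral (ball 0 1) F)) (ball 0 1)"
      by (rule has_integral_of_real[OF integrable_integral[OF intF]])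
    then show ?thesis using fF by (simp add: integral_unique)
  qed
  with Qeq have ReQ: "Re (Q M (\<lambda>\<alpha> \<beta>. integral (ball (0::complex^'n) 1) (\<lambda>w. cnj (mono w \<beta>) * mono w \<alpha>)) b) = integral (ball 0 1) F"
    by simp
  have nonneg: "0 \<le> integral (ball 0 1) F" by (rule integral_nonneg[OF intF]) (simp add: F_def)
  show ?thesis
  proof (rule ccontr)
    assume "\<not> ?thesis"
    with ReQ nonneg have I0: "integral (ball 0 1) F = 0" by simp
    have z: "F w = 0" if "w \<in> cball 0 1" for w
    proof (rule has_integral_0_closure_imp_0[of "ball (0::complex^'n) 1" F])
      show "continuous_on (closure (ball 0 1)) F" using contF continuous_on_subset by blast
      show "0 \<le> F x" for x by (simp add: F_def)
      show "0 < emeasure lborel (ball (0::complex^'n) 1)" by (simp add: emeasure_ball)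
      show "emeasure lborel (ball (0::complex^'n) 1) < \<infinity>" by (rule emeasure_lborel_ball_finite)
      show "emeasure lborel (closure (ball (0::complex^'n) 1)) = emeasure lborel (ball (0::complex^'n) 1)"
        using emeasure_ball[of 1 "0::complex^'n"] emeasure_cball[of 1 "0::complex^'n"] by simp
      have "(F has_integral 0) (ball 0 1)" using intF I0 by (metis has_integral_integral)
      then show "(F has_integral 0) (closure (ball 0 1))"
        using has_integral_closure[of "ball (0::complex^'n) 1" F 0] negligible_sphere[of "0::complex^'n" 1] by simp
    qed (use that in auto)
    have fz: "f w = 0" for w
    proof -
      define t :: real where "t = 1 / (norm w + 1)"
      have t: "t > 0" unfolding t_def by (smt (verit) norm_ge_zero divide_pos_pos)
      have "norm (t *\<^sub>R w) \<le> 1"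
        using t by (simp add: t_def field_simps)
      then have "f (t *\<^sub>R w) = 0" using z[of "t *\<^sub>R w"] by (simp add: F_def)
      moreover have "f (t *\<^sub>R w) = of_real t ^ m * f w" unfolding f_def by (rule hpoly_scale[OF deg])
      ultimately show ?thesis using t by simp
    qed
    have "b \<alpha> = 0" if "\<alpha> \<in> M" for \<alpha>
      by (rule HU[OF finM _ that]) (use fz in \<open>simp add: f_def\<close>)
    with nz show False by blast
  qed
qed

lemma TC:
  fixes c :: "('n::finite \<Rightarrow> nat) \<Rightarrow> ('n \<Rightarrow> nat) \<Rightarrow> complex"
  assumes finM: "finite M" and pol: "\<And>z w. rval c z w = (\<Sum>\<alpha>\<in>M. \<Sum>\<beta>\<in>M. c \<alpha> \<beta> * mono z \<alpha> * cnj (mono w \<beta>))"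
    and contf: "continuous_on UNIV f"
  shows "Tinner c f = (\<Sum>\<alpha>\<in>M. \<Sum>\<beta>\<in>M. c \<alpha> \<beta> * cnj (integral (ball 0 1) (\<lambda>w. cnj (mono w \<alpha>) * f w))
                         * integral (ball 0 1) (\<lambda>w. cnj (mono w \<beta>) * f w))"
proof -
  define V where "V \<beta> = integral (ball 0 1) (\<lambda>w. cnj (mono w \<beta>) * f w)" for \<beta>
  have Vc: "cnj (V \<alpha>) = integral (ball 0 1) (\<lambda>w. mono w \<alpha> * cnj (f w))" for \<alpha>
    unfolding V_def integral_cnj by simp
  have Top: "Top c f z = (\<Sum>\<alpha>\<in>M. \<Sum>\<beta>\<in>M. c \<alpha> \<beta> * mono z \<alpha> * V \<beta>)" for z
  proof -
    have "Top c f z = integral (ball 0 1) (\<lambda>w. \<Sum>\<alpha>\<in>M. \<Sum>\<beta>\<in>M. (c \<alpha> \<beta> * mono z \<alpha>) * (cnj (mono w \<beta>) * f w))"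
      unfolding Top_def pol sum_distrib_right by (simp add: mult_ac)
    also have "\<dots> = (\<Sum>\<alpha>\<in>M. \<Sum>\<beta>\<in>M. c \<alpha> \<beta> * mono z \<alpha> * V \<beta>)"
      by (simp add: integral_sum finM int_ball continuous_intros contf V_def)
    finally show ?thesis .
  qed
  have "Tinner c f = integral (ball 0 1) (\<lambda>z. \<Sum>\<alpha>\<in>M. \<Sum>\<beta>\<in>M. (c \<alpha> \<beta> * V \<beta>) * (mono z \<alpha> * cnj (f z)))"
    unfolding Tinner_def Top sum_distrib_right by (simp add: mult_ac)
  also have "\<dots> = (\<Sum>\<alpha>\<in>M. \<Sum>\<beta>\<in>M. c \<alpha> \<beta> * V \<beta> * cnj (V \<alpha>))"
    by (simp add: integral_sum finM int_ball continuous_intros contf Vc)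
  finally show ?thesis by (simp add: V_def mult_ac)
qed

lemma cont_hpoly [continuous_intros]: "continuous_on S (\<lambda>z. hpoly a z)"
  unfolding hpoly_def by (intro continuous_intros)

lemma forward:
  fixes c :: "('n::finite \<Rightarrow> nat) \<Rightarrow> ('n \<Rightarrow> nat) \<Rightarrow> complex"
  assumes "P_inf c" and "continuous_on UNIV f"
  shows "Tinner c f \<in> \<real> \<and> Re (Tinner c f) \<ge> 0"
proof -
  obtain N :: nat and h where h: "\<forall>z. rval c z z = of_real (\<Sum>j<N. (cmod (hpoly (h j) z))\<^sup>2)"
    using assms(1) unfolding P_inf_def by blast
  define F where "F z w = rval c z w - (\<Sum>j<N. hpoly (h j) z * cnj (hpoly (h j) w))" for z w
  have "SP F"
    unfolding SP_def F_def rval_alt hpoly_def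
    by (simp only: cnj_sum complex_cnj_mult) (intro allI holomorphic_intros)
  moreover have "F z z = 0" for z
    by (simp only: F_def h of_real_sum complex_norm_square diff_self)
  ultimately have pol: "rval c z w = (\<Sum>j<N. hpoly (h j) z * cnj (hpoly (h j) w))" for z w
    using polarization[of F z w] by (simp add: F_def)
  define A where "A j = integral (ball 0 1) (\<lambda>w. cnj (hpoly (h j) w) * f w)" for j
  have Ac: "cnj (A j) = integral (ball 0 1) (\<lambda>w. hpoly (h j) w * cnj (f w))" for j
    unfolding A_def integral_cnj by simp
  have Top: "Top c f z = (\<Sum>j<N. hpoly (h j) z * A j)" for z
  proof -
    have "Top c f z = integral (ball 0 1) (\<lambda>w. \<Sum>j<N. hpoly (h j) z * (cnj (hpoly (h j) w) * f w))"
      unfolding Top_def pol sum_distrib_right by (simp add: mult_ac)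
    also have "\<dots> = (\<Sum>j<N. hpoly (h j) z * A j)"
      by (simp add: integral_sum int_ball continuous_intros assms(2) A_def)
    finally show ?thesis .
  qed
  have "Tinner c f = integral (ball 0 1) (\<lambda>z. \<Sum>j<N. A j * (hpoly (h j) z * cnj (f z)))"
    unfolding Tinner_def Top sum_distrib_right by (simp add: mult_ac)
  also have "\<dots> = (\<Sum>j<N. A j * cnj (A j))"
    by (simp add: integral_sum int_ball continuous_intros assms(2) Ac)
  also have "\<dots> = of_real (\<Sum>j<N. (cmod (A j))\<^sup>2)"
    by (simp only: of_real_sum complex_norm_square)
  finally show ?thesis by (simp add: sum_nonneg)
qed

lemma backward:
  fixes c :: "('n::finite \<Rightarrow> nat) \<Rightarrow> ('n \<Rightarrow> nat) \<Rightarrow> complex" and m :: nat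
  assumes herm: "hermitian_symmetric c" and bihom: "bihomogeneous m c"
    and pos: "\<forall>f\<in>Vm m. Tinner c f \<in> \<real> \<and> Re (Tinner c f) \<ge> 0"
  shows "P_inf c"
proof -
  define M where "M = {\<alpha>::'n \<Rightarrow> nat. sum \<alpha> UNIV = m}"
  have finM: "finite M" unfolding M_def by (rule finite_M)
  have hs: "finite {(\<alpha>, \<beta>). c \<alpha> \<beta> \<noteq> 0} \<and> (\<forall>\<alpha> \<beta>. c \<alpha> \<beta> = cnj (c \<beta> \<alpha>))"
    using herm unfolding hermitian_symmetric_def finite_coeffs2_def .
  have fin: "finite {(\<alpha>, \<beta>). c \<alpha> \<beta> \<noteq> 0}" using hs by (rule conjunct1)
  have hc: "\<forall>\<alpha> \<beta>. c \<alpha> \<beta> = cnj (c \<beta> \<alpha>)" using hs by (rule conjunct2)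
  define RM where "RM z w = (\<Sum>\<alpha>\<in>M. \<Sum>\<beta>\<in>M. c \<alpha> \<beta> * mono z \<alpha> * cnj (mono w \<beta>))" for z w
  have diag: "rval c z z = RM z z" for z
    unfolding RM_def M_def by (rule diag_reduction[OF fin bihom])
  have "SP (\<lambda>z w. rval c z w - RM z w)"
    unfolding SP_def rval_alt RM_def by (intro allI holomorphic_intros)
  then have pol: "rval c z w = RM z w" for z w
    using polarization[of "\<lambda>z w. rval c z w - RM z w" z w] diag by simp
  define cG where "cG \<alpha> \<beta> = integral (ball (0::complex^'n) 1) (\<lambda>w. cnj (mono w \<beta>) * mono w \<alpha>)" for \<alpha> \<beta>
  have hG: "\<forall>\<alpha> \<beta>. cG \<alpha> \<beta> = cnj (cG \<beta> \<alpha>)"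
    unfolding cG_def integral_cnj by (simp add: mult.commute)
  have pdG: "\<forall>u. (\<exists>\<alpha>\<in>M. u \<alpha> \<noteq> 0) \<longrightarrow> 0 < Re (Q M cG u)"
    unfolding cG_def using gram_pd[OF finM] by (auto simp: M_def)
  have psd: "\<forall>u. 0 \<le> Re (Q M c u)"
  proof
    fix u :: "('n \<Rightarrow> nat) \<Rightarrow> complex"
    obtain b where b: "\<forall>\<beta>\<in>M. (\<Sum>\<alpha>\<in>M. cG \<alpha> \<beta> * b \<alpha>) = cnj (u \<beta>)"
      using solve_pd[OF finM hG pdG, of "\<lambda>\<beta>. cnj (u \<beta>)"] by blast
    define f where "f z = (\<Sum>\<alpha>\<in>M. b \<alpha> * mono z \<alpha>)" for z
    have fV: "f \<in> Vm m" unfolding Vm_def f_def M_def by blast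
    have contf: "continuous_on UNIV f" unfolding f_def by (intro continuous_intros)
    have V: "integral (ball 0 1) (\<lambda>w. cnj (mono w \<beta>) * f w) = cnj (u \<beta>)" if "\<beta> \<in> M" for \<beta>
    proof -
      have "integral (ball 0 1) (\<lambda>w. cnj (mono w \<beta>) * f w) = (\<Sum>\<alpha>\<in>M. cG \<alpha> \<beta> * b \<alpha>)"
        unfolding f_def sum_distrib_left cG_def
        by (simp add: integral_sum finM int_ball continuous_intros mult_ac)
      then show ?thesis using b that by simp
    qed
    have "Tinner c f = Q M c u"
      unfolding TC[OF finM pol[unfolded RM_def] contf] Q_def
      by (intro sum.cong refl) (simp add: V)
    then show "0 \<le> Re (Q M c u)" using pos fV by metis
  qed
  obtain N :: nat and a where a: "\<forall>u. Q M c u = of_real (\<Sum>j<N. (cmod (\<Sum>\<alpha>\<in>M. a j \<alpha> * u \<alpha>))\<^sup>2)"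
    using factorization[OF finM hc psd] by blast
  define h where "h j \<alpha> = (if \<alpha> \<in> M then a j \<alpha> else 0)" for j \<alpha>
  have finh: "finite {\<alpha>. h j \<alpha> \<noteq> 0}" for j
    by (rule finite_subset[OF _ finM]) (auto simp: h_def split: if_splits)
  have hp: "hpoly (h j) z = (\<Sum>\<alpha>\<in>M. a j \<alpha> * mono z \<alpha>)" for j z
  proof -
    have "hpoly (h j) z = (\<Sum>\<alpha>\<in>M. h j \<alpha> * mono z \<alpha>)"
      unfolding hpoly_def by (rule sum.mono_neutral_left[OF finM]) (auto simp: h_def split: if_splits)
    then show ?thesis by (simp add: h_def)
  qed
  have "rval c z z = of_real (\<Sum>j<N. (cmod (hpoly (h j) z))\<^sup>2)" for z
    unfolding diag hp RM_def using a[rule_format, of "\<lambda>\<alpha>. mono z \<alpha>"] by (simp add: Q_def)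
  then show ?thesis unfolding P_inf_def using finh by blast
qed

theorem lemma3p2:
  fixes c :: "('n::finite \<Rightarrow> nat) \<Rightarrow> ('n \<Rightarrow> nat) \<Rightarrow> complex" and m :: nat
  assumes "hermitian_symmetric c" and "bihomogeneous m c"
  shows "P_inf c \<longleftrightarrow> (\<forall>f\<in>Vm m. Tinner c f \<in> \<real> \<and> Re (Tinner c f) \<ge> 0)"
proof
  assume "P_inf c"
  show "\<forall>f\<in>Vm m. Tinner c f \<in> \<real> \<and> Re (Tinner c f) \<ge> 0"
  proof
    fix f :: "complex^'n \<Rightarrow> complex" assume "f \<in> Vm m"
    then obtain b where "f = (\<lambda>z. \<Sum>\<alpha>\<in>{\<alpha>. sum \<alpha> UNIV = m}. b \<alpha> * mono z \<alpha>)" unfolding Vm_def by blast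
    then have "continuous_on UNIV f" by (simp add: continuous_intros)
    then show "Tinner c f \<in> \<real> \<and> Re (Tinner c f) \<ge> 0" using forward[OF \<open>P_inf c\<close>] by blast
  qed
next
  assume "\<forall>f\<in>Vm m. Tinner c f \<in> \<real> \<and> Re (Tinner c f) \<ge> 0"
  then show "P_inf c" using backward[OF assms] by blast
qed

end
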